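(* Under the standing assumptions below (Assumption 1 with $\xi=\beta$), for every $(Q,\mu)\in\mathcal{C}\times\mathcal{P}(\mathsf{X})$ the function $x\mapsto f(x,Q,\mu)$ is well defined and $H(Q,\mu)=(H_1(Q,\mu),H_2(Q,\mu))\in\mathcal{C}\times\mathcal{P}(\mathsf{X})$. In particular, $\|H_1(Q,\mu)\|_w\le \frac{M}{1-\beta\alpha}$ and $\|(H_1(Q,\mu))_{\min}\|_{\mathrm{Lip}}\le \frac{L_2}{1-\beta K_2}$.
   Context: Setting. $\mathsf{X}$ is a Polish space with metric $d_{\mathsf X}$; $\mathsf{A}\subset\mathbb{R}^d$ is compact, with Euclidean norm $\|\cdot\|$. $\mathcal{P}(\mathsf X)$ is the set of Borel probability measures on $\mathsf X$. $p:\mathsf X\times\mathsf A\times\mathcal P(\mathsf X)\to\mathcal P(\mathsf X)$ is a measurable transition kernel and $c:\mathsf X\times\mathsf A\times\mathcal P(\mathsf X)\to[0,\infty)$ a measurable one-stage cost. $\beta\in(0,1)$ is a discount factor. Notation. $w:\mathsf X\times\mathsf A\to[1,\infty)$ is a continuous weight function. For $u:\mathsf X\times\mathsf A\to\mathbb R$, $u_{\min}(x)=\inf_{a\in\mathsf A}u(x,a)$ and $u_{\max}(x)=\sup_{a\in\mathsf A}u(x,a)$ (in particular $w_{\max}(x)=\sup_a w(x,a)$). $\|v\|_w=\sup_{x,a}|v(x,a)|/w(x,a)$ for $v:\mathsf X\times\mathsf A\to\mathbb R$; $\|u\|_{w_{\max}}=\sup_x|u(x)|/w_{\max}(x)$ for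 $u:\mathsf X\to\mathbb R$. $B(\mathsf X,K)$ is the set of measurable $u:\mathsf X\to\mathbb R$ with $\|u\|_{w_{\max}}\le K$. For $g:\mathsf X\to\mathbb R$, $\|g\|_{\mathrm{Lip}}=\sup_{x\ne y}|g(x)-g(y)|/d_{\mathsf X}(x,y)$, and $\mathrm{Lip}(\mathsf X,K)$ is the set of continuous $g$ with $\|g\|_{\mathrm{Lip}}\le K$. $W_1(\mu,\nu)=\inf\{\int d_{\mathsf X}(x,y)\,\xi(dx,dy):\xi$ a coupling of $\mu,\nu\}=\sup\{|\int g\,d\mu-\int g\,d\nu|: g\in\mathrm{Lip}(\mathsf X,1)\}$. Assumption 1 (with $\xi=\beta$). (a) $c$ is continuous, $\|c(\cdot,\cdot,\mu)-c(\cdot,\cdot,\hat\mu)\|_w\le L_1W_1(\mu,\hat\mu)$ for all $\mu,\hat\mu$, and $\sup_{(a,\mu)}|c(x,a,\mu)-c(\hat x,a,\mu)|\le L_2 d_{\mathsf X}(x,\hat x)$ for all $x,\hat x$. (b) $p(\cdot|x,a,\mu)$ is weakly continuous in $(x,a,\mu)$, $\sup_x W_1(p(\cdot|x,a,\mu),p(\cdot|x,\hat a,\hat\mu))\le K_1(\|a-\hat a\|+W_1(\mu,\hat\mu))$ and $\sup_\mu W_1(p(\cdot|x,a,\mu),p(\cdot|\hat x,\hat a,\mu))\le K_2(d_{\mathsf X}(x,\hat x)+\|a-\hat a\|)$, with $\beta K_2<1$. (c) $\mathsf A$ is convex. (d) There are $M,\alpha\ge0$ with $\beta\alpha<1$,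 $c(x,a,\mu)\le M w(x,a)$ and $\int w_{\max}(y)\,p(dy|x,a,\mu)\le\alpha w(x,a)$ for all $(x,a,\mu)$. (e) Let $F(x,v,\mu,a)=c(x,a,\mu)+\xi\int v(y)\,p(dy|x,a,\mu)$ and let $\mathcal F$ be the set of nonnegative functions in $\mathrm{Lip}(\mathsf X,\frac{L_2}{1-\xi K_2})\cap B(\mathsf X,\frac{M}{1-\xi\alpha})$. For all $v\in\mathcal F$, $\mu$, $x$, $a\mapsto F(x,v,\mu,a)$ is differentiable and $\rho$-strongly convex on $\mathsf A$ for some $\rho>0$: $F(x,v,\mu,a)\ge F(x,v,\mu,\hat a)+\nabla F(x,v,\mu,\hat a)^T(a-\hat a)+\frac\rho2\|a-\hat a\|^2$; and $\sup_{a}\|\nabla F(x,v,\mu,a)-\nabla F(\hat x,\hat v,\hat\mu,a)\|\le K_F(d_{\mathsf X}(x,\hat x)+\|v-\hat v\|_{w_{\max}}+W_1(\mu,\hat\mu))$ for all $x,\hat x\in\mathsf X$, $v,\hat v\in\mathcal F$, $\mu,\hat\mu$. Here gradients are with respect to $a$. Objects. $\mathcal C=\{Q:\mathsf X\times\mathsf A\to[0,\infty)$ measurable $:\ \|Q\|_w\le\frac{M}{1-\beta\alpha},\ \|Q_{\min}\|_{\mathrm{Lip}}\le\frac{L_2}{1-\beta K_2}\}$. For $(x,Q,\mu)\in\mathsf X\times\mathcal C\times\mathcal P(\mathsf X)$, $f(x,Q,\mu)$ is the unique minimizer over $a\in\mathsf A$ of $F(x,Q_{\min},\mu,a)=c(x,a,\mu)+\beta\int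 Q_{\min}(y)p(dy|x,a,\mu)$. The MFE operator is $H(Q,\mu)=(H_1(Q,\mu),H_2(Q,\mu))$ with $H_1(Q,\mu)(x,a)=c(x,a,\mu)+\beta\int_{\mathsf X}Q_{\min}(y)\,p(dy|x,a,\mu)$ and $H_2(Q,\mu)(\cdot)=\int_{\mathsf X}p(\cdot|x,f(x,Q,\mu),\mu)\,\mu(dx)$. *)

theory Defs
  imports "HOL-Probability.Probability"
begin

definition probs :: "'x::topological_space measure set" where
  "probs = {M. prob_space M \<and> sets M = sets borel}"

definition weak_conv :: "(nat \<Rightarrow> 'x::topological_space measure) \<Rightarrow> 'x measure \<Rightarrow> bool" where
  "weak_conv Ms M \<longleftrightarrow>
     (\<forall>g::'x \<Rightarrow> real. continuous_on UNIV g \<and> bounded (range g) \<longrightarrow>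
        (\<lambda>n. integral\<^sup>L (Ms n) g) \<longlonglongrightarrow> integral\<^sup>L M g)"

definition coupling :: "'x::metric_space measure \<Rightarrow> 'x measure \<Rightarrow> ('x \<times> 'x) measure \<Rightarrow> bool" where
  "coupling \<mu> \<nu> \<xi> \<longleftrightarrow> prob_space \<xi> \<and> sets \<xi> = sets (borel \<Otimes>\<^sub>M borel) \<and>
     distr \<xi> borel fst = \<mu> \<and> distr \<xi> borel snd = \<nu>"

definition W1 :: "'x::metric_space measure \<Rightarrow> 'x measure \<Rightarrow> ennreal" where
  "W1 \<mu> \<nu> = (INF \<xi> \<in> {\<xi>. coupling \<mu> \<nu> \<xi>}. \<integral>\<^sup>+ z. ennreal (dist (fst z) (snd z)) \<partial>\<xi>)"

definition umin :: "'a set \<Rightarrow> ('x \<Rightarrow> 'a \<Rightarrow> real) \<Rightarrow> 'x \<Rightarrow> real" where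
  "umin A u x = (INF a\<in>A. u x a)"

definition umax :: "'a set \<Rightarrow> ('x \<Rightarrow> 'a \<Rightarrow> real) \<Rightarrow> 'x \<Rightarrow> real" where
  "umax A u x = (SUP a\<in>A. u x a)"

text \<open>The statement \<open>\<parallel>v\<parallel>_w \<le> K\<close> written out pointwise.\<close>
definition wnorm_le :: "'a set \<Rightarrow> ('x \<Rightarrow> 'a \<Rightarrow> real) \<Rightarrow> ('x \<Rightarrow> 'a \<Rightarrow> real) \<Rightarrow> real \<Rightarrow> bool" where
  "wnorm_le A w v K \<longleftrightarrow> (\<forall>x. \<forall>a\<in>A. \<bar>v x a\<bar> \<le> K * w x a)"

definition wmax_norm :: "'a set \<Rightarrow> ('x \<Rightarrow> 'a \<Rightarrow> real) \<Rightarrow> ('x \<Rightarrow> real) \<Rightarrow> real" where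
  "wmax_norm A w u = (SUP x. \<bar>u x\<bar> / umax A w x)"

definition Bset :: "'a set \<Rightarrow> ('x::topological_space \<Rightarrow> 'a \<Rightarrow> real) \<Rightarrow> real \<Rightarrow> ('x \<Rightarrow> real) set" where
  "Bset A w K = {u. u \<in> borel_measurable borel \<and> (\<forall>x. \<bar>u x\<bar> \<le> K * umax A w x)}"

definition LipSet :: "real \<Rightarrow> ('x::metric_space \<Rightarrow> real) set" where
  "LipSet K = {g. continuous_on UNIV g \<and> (\<forall>x y. \<bar>g x - g y\<bar> \<le> K * dist x y)}"

definition Fop :: "('x \<Rightarrow> 'a \<Rightarrow> 'x measure \<Rightarrow> real) \<Rightarrow> ('x \<Rightarrow> 'a \<Rightarrow> 'x measure \<Rightarrow> 'x measure)
    \<Rightarrow> real \<Rightarrow> 'x \<Rightarrow> ('x \<Rightarrow> real) \<Rightarrow> 'x measure \<Rightarrow> 'a \<Rightarrow> real" where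
  "Fop c p \<xi> x v \<mu> a = c x a \<mu> + \<xi> * (\<integral>y. v y \<partial>(p x a \<mu>))"

definition Fclass :: "'a set \<Rightarrow> ('x::metric_space \<Rightarrow> 'a \<Rightarrow> real) \<Rightarrow> real \<Rightarrow> real \<Rightarrow> real \<Rightarrow> real \<Rightarrow> real
    \<Rightarrow> ('x \<Rightarrow> real) set" where
  "Fclass A w \<xi> L2 K2 M \<alpha> =
     {v. (\<forall>x. 0 \<le> v x) \<and> v \<in> LipSet (L2 / (1 - \<xi> * K2)) \<and> v \<in> Bset A w (M / (1 - \<xi> * \<alpha>))}"

definition Cclass :: "'a::topological_space set \<Rightarrow> ('x::metric_space \<Rightarrow> 'a \<Rightarrow> real) \<Rightarrow> real \<Rightarrow> real \<Rightarrow> real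
    \<Rightarrow> real \<Rightarrow> real \<Rightarrow> ('x \<Rightarrow> 'a \<Rightarrow> real) set" where
  "Cclass A w \<beta> L2 K2 M \<alpha> =
     {Q. (\<lambda>z. Q (fst z) (snd z)) \<in> borel_measurable (restrict_space borel (UNIV \<times> A)) \<and>
         (\<forall>x. \<forall>a\<in>A. 0 \<le> Q x a) \<and>
         wnorm_le A w Q (M / (1 - \<beta> * \<alpha>)) \<and>
         (\<forall>x y. \<bar>umin A Q x - umin A Q y\<bar> \<le> (L2 / (1 - \<beta> * K2)) * dist x y)}"

definition is_minimizer :: "'a set \<Rightarrow> ('a \<Rightarrow> real) \<Rightarrow> 'a \<Rightarrow> bool" where
  "is_minimizer A g a \<longleftrightarrow> a \<in> A \<and> (\<forall>b\<in>A. g a \<le> g b)"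

definition fpol :: "('x \<Rightarrow> 'a \<Rightarrow> 'x measure \<Rightarrow> real) \<Rightarrow> ('x \<Rightarrow> 'a \<Rightarrow> 'x measure \<Rightarrow> 'x measure)
    \<Rightarrow> real \<Rightarrow> 'a set \<Rightarrow> 'x \<Rightarrow> ('x \<Rightarrow> 'a \<Rightarrow> real) \<Rightarrow> 'x measure \<Rightarrow> 'a" where
  "fpol c p \<beta> A x Q \<mu> = (THE a. is_minimizer A (Fop c p \<beta> x (umin A Q) \<mu>) a)"

definition H1 :: "('x \<Rightarrow> 'a \<Rightarrow> 'x measure \<Rightarrow> real) \<Rightarrow> ('x \<Rightarrow> 'a \<Rightarrow> 'x measure \<Rightarrow> 'x measure)
    \<Rightarrow> real \<Rightarrow> 'a set \<Rightarrow> ('x \<Rightarrow> 'a \<Rightarrow> real) \<Rightarrow> 'x measure \<Rightarrow> 'x \<Rightarrow> 'a \<Rightarrow> real" where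
  "H1 c p \<beta> A Q \<mu> x a = c x a \<mu> + \<beta> * (\<integral>y. umin A Q y \<partial>(p x a \<mu>))"

definition H2 :: "('x::topological_space \<Rightarrow> 'a \<Rightarrow> 'x measure \<Rightarrow> real) \<Rightarrow> ('x \<Rightarrow> 'a \<Rightarrow> 'x measure \<Rightarrow> 'x measure)
    \<Rightarrow> real \<Rightarrow> 'a set \<Rightarrow> ('x \<Rightarrow> 'a \<Rightarrow> real) \<Rightarrow> 'x measure \<Rightarrow> 'x measure" where
  "H2 c p \<beta> A Q \<mu> =
     measure_of UNIV (sets borel)
       (\<lambda>B. \<integral>\<^sup>+ x. emeasure (p x (fpol c p \<beta> A x Q \<mu>) \<mu>) B \<partial>\<mu>)"

end

theory Submission
  imports Defs
begin


lemma umin_diff_le: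
  fixes u :: "'x \<Rightarrow> 'a \<Rightarrow> real"
  assumes "A \<noteq> {}" "\<And>a. a \<in> A \<Longrightarrow> 0 \<le> u x a" "\<And>a. a \<in> A \<Longrightarrow> 0 \<le> u y a"
    and "\<And>a. a \<in> A \<Longrightarrow> \<bar>u x a - u y a\<bar> \<le> D"
  shows "\<bar>umin A u x - umin A u y\<bar> \<le> D"
proof -
  have bx: "bdd_below (u x ` A)" "bdd_below (u y ` A)" using assms(2,3) by (auto intro!: bdd_belowI2)
  have 1: "umin A u x \<le> umin A u y + D"
  proof -
    have "umin A u x - D \<le> umin A u y" unfolding umin_def
    proof (rule cINF_greatest[OF assms(1)])
      fix a assume a: "a \<in> A"
      have "(INF a\<in>A. u x a) \<le> u x a" by (rule cINF_lower[OF bx(1) a])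
      then show "(INF a\<in>A. u x a) - D \<le> u y a" using assms(4)[OF a] by linarith
    qed
    then show ?thesis by linarith
  qed
  have 2: "umin A u y \<le> umin A u x + D"
  proof -
    have "umin A u y - D \<le> umin A u x" unfolding umin_def
    proof (rule cINF_greatest[OF assms(1)])
      fix a assume a: "a \<in> A"
      have "(INF a\<in>A. u y a) \<le> u y a" by (rule cINF_lower[OF bx(2) a])
      then show "(INF a\<in>A. u y a) - D \<le> u x a" using assms(4)[OF a] by linarith
    qed
    then show ?thesis by linarith
  qed
  from 1 2 show ?thesis by linarith
qed

lemma KR_bound:
  fixes g :: "'x::metric_space \<Rightarrow> real"
  assumes mu: "\<mu> \<in> probs" and nu: "\<nu> \<in> probs"
    and gm: "g \<in> borel_measurable borel" and gi: "integrable \<mu> g" "integrable \<nu> g"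
    and lip: "\<And>x y. \<bar>g x - g y\<bar> \<le> K * dist x y" and K: "0 < K"
    and fin: "W1 \<mu> \<nu> < \<top>"
  shows "\<bar>integral\<^sup>L \<mu> g - integral\<^sup>L \<nu> g\<bar> \<le> K * enn2real (W1 \<mu> \<nu>)"
proof -
  have main: "ennreal (\<bar>integral\<^sup>L \<mu> g - integral\<^sup>L \<nu> g\<bar> / K) \<le> W1 \<mu> \<nu>"
    unfolding W1_def
  proof (rule INF_greatest)
    fix \<xi> assume "\<xi> \<in> {\<xi>. coupling \<mu> \<nu> \<xi>}"
    then have cp: "prob_space \<xi>" "sets \<xi> = sets (borel \<Otimes>\<^sub>M borel)" "distr \<xi> borel fst = \<mu>" "distr \<xi> borel snd = \<nu>"
      by (auto simp: coupling_def)
    have mf: "fst \<in> measurable \<xi> borel" using cp(2) by (simp add: measurable_cong_sets[OF cp(2) refl])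
    have ms: "snd \<in> measurable \<xi> borel" using cp(2) by (simp add: measurable_cong_sets[OF cp(2) refl])
    have i1: "integrable \<xi> (\<lambda>z. g (fst z))"
      using gi(1) integrable_distr_eq[OF mf gm] cp(3) by simp
    have i2: "integrable \<xi> (\<lambda>z. g (snd z))"
      using gi(2) integrable_distr_eq[OF ms gm] cp(4) by simp
    have e1: "integral\<^sup>L \<mu> g = (\<integral>z. g (fst z) \<partial>\<xi>)"
      using integral_distr[OF mf gm] cp(3) by simp
    have e2: "integral\<^sup>L \<nu> g = (\<integral>z. g (snd z) \<partial>\<xi>)"
      using integral_distr[OF ms gm] cp(4) by simp
    have "\<bar>integral\<^sup>L \<mu> g - integral\<^sup>L \<nu> g\<bar> / K = \<bar>\<integral>z. (g (fst z) - g (snd z)) / K \<partial>\<xi>\<bar>"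
      using e1 e2 i1 i2 K by (simp add: Bochner_Integration.integral_diff abs_divide)
    also have "ennreal \<dots> \<le> (\<integral>\<^sup>+z. ennreal (norm ((g (fst z) - g (snd z)) / K)) \<partial>\<xi>)"
      using integral_norm_bound_ennreal[of \<xi> "\<lambda>z. (g (fst z) - g (snd z)) / K"] i1 i2
      by (simp add: Bochner_Integration.integrable_diff)
    also have "\<dots> \<le> (\<integral>\<^sup>+z. ennreal (dist (fst z) (snd z)) \<partial>\<xi>)"
    proof (rule nn_integral_mono)
      fix z
      have "\<bar>g (fst z) - g (snd z)\<bar> / K \<le> dist (fst z) (snd z)"
        using lip[of "fst z" "snd z"] K by (simp add: divide_le_eq mult.commute)
      then show "ennreal (norm ((g (fst z) - g (snd z)) / K)) \<le> ennreal (dist (fst z) (snd z))"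
        using K by (simp add: abs_divide ennreal_leI)
    qed
    finally show "ennreal (\<bar>integral\<^sup>L \<mu> g - integral\<^sup>L \<nu> g\<bar> / K) \<le> (\<integral>\<^sup>+z. ennreal (dist (fst z) (snd z)) \<partial>\<xi>)" .
  qed
  have "\<bar>integral\<^sup>L \<mu> g - integral\<^sup>L \<nu> g\<bar> / K \<le> enn2real (W1 \<mu> \<nu>)"
    using main fin by (metis abs_ge_zero divide_nonneg_pos K enn2real_ennreal enn2real_mono)
  then show ?thesis using K by (simp add: divide_le_eq mult.commute)
qed

lemma midpoint_sc:
  fixes F :: "'a::euclidean_space \<Rightarrow> real"
  assumes cvx: "convex A" and a: "a \<in> A" and b: "b \<in> A"
    and sc: "\<And>u v. u \<in> A \<Longrightarrow> v \<in> A \<Longrightarrow> F u \<ge> F v + D v \<bullet> (u - v) + \<rho> / 2 * (norm (u - v))\<^sup>2"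
  shows "(1/2) *\<^sub>R (a + b) \<in> A" "F a + F b \<ge> 2 * F ((1/2) *\<^sub>R (a + b)) + \<rho> / 4 * (norm (a - b))\<^sup>2"
proof -
  let ?m = "(1/2) *\<^sub>R (a + b)"
  have "(1/2) *\<^sub>R a + (1/2) *\<^sub>R b \<in> A" by (rule convexD[OF cvx a b]) auto
  then show m: "?m \<in> A" by (simp add: scaleR_right_distrib)
  have aa: "a = (1/2) *\<^sub>R a + (1/2) *\<^sub>R a" by (metis scaleR_half_double scaleR_right_distrib)
  have bb: "b = (1/2) *\<^sub>R b + (1/2) *\<^sub>R b" by (metis scaleR_half_double scaleR_right_distrib)
  have d1: "a - ?m = (1/2) *\<^sub>R (a - b)" by (subst (1) aa) (simp add: algebra_simps)
  have d2: "b - ?m = - ((1/2) *\<^sub>R (a - b))" by (subst (1) bb) (simp add: algebra_simps)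
  have n1: "(norm (a - ?m))\<^sup>2 = (norm (a - b))\<^sup>2 / 4" unfolding d1 by (simp add: power2_eq_square)
  have n2: "(norm (b - ?m))\<^sup>2 = (norm (a - b))\<^sup>2 / 4" unfolding d2 norm_minus_cancel by (simp add: power2_eq_square)
  have i1: "F a \<ge> F ?m + D ?m \<bullet> (a - ?m) + \<rho> / 2 * (norm (a - ?m))\<^sup>2" by (rule sc[OF a m])
  have i2: "F b \<ge> F ?m + D ?m \<bullet> (b - ?m) + \<rho> / 2 * (norm (b - ?m))\<^sup>2" by (rule sc[OF b m])
  have "D ?m \<bullet> (b - ?m) = - (D ?m \<bullet> (a - ?m))" unfolding d1 d2 by (simp add: inner_minus_right)
  moreover have j1: "F a \<ge> F ?m + D ?m \<bullet> (a - ?m) + \<rho> / 2 * ((norm (a - b))\<^sup>2 / 4)" using i1 unfolding n1 .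
  moreover have j2: "F b \<ge> F ?m + D ?m \<bullet> (b - ?m) + \<rho> / 2 * ((norm (a - b))\<^sup>2 / 4)" using i2 unfolding n2 .
  moreover have "\<rho> / 2 * ((norm (a - b))\<^sup>2 / 4) + \<rho> / 2 * ((norm (a - b))\<^sup>2 / 4) = \<rho> / 4 * (norm (a - b))\<^sup>2"
    by (simp add: field_simps)
  ultimately show "F a + F b \<ge> 2 * F ?m + \<rho> / 4 * (norm (a - b))\<^sup>2" by linarith
qed

lemma quad_growth:
  fixes F :: "'a::euclidean_space \<Rightarrow> real"
  assumes cvx: "convex A" and a: "a \<in> A" and b: "b \<in> A" and min: "\<forall>c\<in>A. F a \<le> F c"
    and sc: "\<And>u v. u \<in> A \<Longrightarrow> v \<in> A \<Longrightarrow> F u \<ge> F v + D v \<bullet> (u - v) + \<rho> / 2 * (norm (u - v))\<^sup>2"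
  shows "F b \<ge> F a + \<rho> / 4 * (norm (a - b))\<^sup>2"
  using midpoint_sc[OF cvx a b sc] min by fastforce



lemma probs_D: "M \<in> probs \<Longrightarrow> prob_space M" "M \<in> probs \<Longrightarrow> sets M = sets borel"
  by (auto simp: probs_def)

lemma meas_probs: "M \<in> probs \<Longrightarrow> f \<in> borel_measurable borel \<Longrightarrow> f \<in> borel_measurable M"
  using measurable_cong_sets[of M borel borel borel] by (auto simp: probs_def)

lemma closed_meas_from_weak:
  fixes P :: "'y::topological_space \<Rightarrow> 'x::metric_space measure"
  assumes Pp: "\<And>x. P x \<in> probs"
    and cont: "\<And>h::'x \<Rightarrow> real. continuous_on UNIV h \<Longrightarrow> bounded (range h) \<Longrightarrow>
                 (\<lambda>x. integral\<^sup>L (P x) h) \<in> borel_measurable borel"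
    and C: "closed C"
  shows "(\<lambda>x. emeasure (P x) C) \<in> borel_measurable borel"
proof (cases "C = {}")
  case True then show ?thesis by simp
next
  case False
  define h where "h n y = max 0 (1 - real n * infdist y C)" for n y
  have hc: "continuous_on UNIV (h n)" for n
    unfolding h_def by (intro continuous_intros)
  have hb: "bounded (range (h n))" for n
  proof -
    have "\<forall>y. norm (h n y) \<le> 1" unfolding h_def using infdist_nonneg[of _ C] by auto
    then show ?thesis by (auto simp: bounded_iff)
  qed
  have hlim: "(\<lambda>n. h n y) \<longlonglongrightarrow> indicator C y" for y
  proof (cases "y \<in> C")
    case True
    then have "infdist y C = 0" by (simp add: infdist_zero)
    then show ?thesis using True by (simp add: h_def)
  next
    case nC: False
    have d: "infdist y C > 0" using in_closed_iff_infdist_zero[OF C False] nC infdist_nonneg[of y C] by auto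
    obtain N where N: "1 / infdist y C < real N" using reals_Archimedean2 by blast
    have "eventually (\<lambda>n. h n y = 0) sequentially"
    proof (rule eventually_sequentiallyI[of N])
      fix n assume "N \<le> n"
      then have "1 / infdist y C < real n" using N by (meson less_le_trans of_nat_le_iff)
      then have "1 < real n * infdist y C" using d by (simp add: divide_less_eq)
      then show "h n y = 0" by (simp add: h_def)
    qed
    then have "(\<lambda>n. h n y) \<longlonglongrightarrow> 0" by (rule tendsto_eventually)
    then show ?thesis using nC by simp
  qed
  have hm: "h n \<in> borel_measurable borel" for n using hc by (rule borel_measurable_continuous_onI)
  have Cm: "C \<in> sets borel" using C by simp
  have lim: "(\<lambda>n. integral\<^sup>L (P x) (h n)) \<longlonglongrightarrow> measure (P x) C" for x
  proof -
    interpret prob_space "P x" using Pp[of x] by (simp add: probs_def)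
    have Cx: "C \<in> sets (P x)" using Pp[of x] Cm by (simp add: probs_def)
    have "(\<lambda>n. integral\<^sup>L (P x) (h n)) \<longlonglongrightarrow> integral\<^sup>L (P x) (indicator C :: 'x \<Rightarrow> real)"
    proof (rule integral_dominated_convergence[where w="\<lambda>_. 1"])
      show "(indicator C :: 'x \<Rightarrow> real) \<in> borel_measurable (P x)" using Cx by simp
      show "h n \<in> borel_measurable (P x)" for n using meas_probs[OF Pp hm] .
      show "integrable (P x) (\<lambda>_. 1::real)" by simp
      show "AE y in P x. (\<lambda>n. h n y) \<longlonglongrightarrow> indicator C y" using hlim by simp
      show "AE y in P x. norm (h n y) \<le> 1" for n unfolding h_def using infdist_nonneg[of _ C] by auto
    qed
    then show ?thesis using Cx by simp
  qed
  have "(\<lambda>x. measure (P x) C) \<in> borel_measurable borel"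
    by (rule borel_measurable_LIMSEQ_real[where u="\<lambda>n x. integral\<^sup>L (P x) (h n)", OF lim]) (intro cont hc hb)
  then have "(\<lambda>x. ennreal (measure (P x) C)) \<in> borel_measurable borel" by simp
  moreover have "emeasure (P x) C = ennreal (measure (P x) C)" for x
    using Pp[of x] by (simp add: probs_def finite_measure.emeasure_eq_measure prob_space.finite_measure)
  ultimately show ?thesis by simp
qed

lemma kernel_measurable:
  fixes P :: "'y::topological_space \<Rightarrow> 'x::metric_space measure"
  assumes Pp: "\<And>x. P x \<in> probs"
    and cont: "\<And>h::'x \<Rightarrow> real. continuous_on UNIV h \<Longrightarrow> bounded (range h) \<Longrightarrow>
                 (\<lambda>x. integral\<^sup>L (P x) h) \<in> borel_measurable borel"
  shows "P \<in> measurable borel (subprob_algebra borel)"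
proof (rule measurable_subprob_algebra_generated[where \<Omega>=UNIV and G="Collect closed"])
  show "sets borel = sigma_sets UNIV (Collect closed)" by (subst borel_eq_closed) simp
  show "Int_stable (Collect closed)" by (auto simp: Int_stable_def)
  show "Collect closed \<subseteq> Pow UNIV" by simp
  show "subprob_space (P a)" for a using Pp[of a] by (simp add: probs_def prob_space_imp_subprob_space)
  show "sets (P a) = sets borel" for a using Pp[of a] by (simp add: probs_def)
  show "(\<lambda>a. emeasure (P a) A) \<in> borel_measurable borel" if "A \<in> Collect closed" for A
    using closed_meas_from_weak[OF Pp cont] that by auto
  show "(\<lambda>a. emeasure (P a) UNIV) \<in> borel_measurable borel"
    using closed_meas_from_weak[OF Pp cont] by auto
qed



lemma bind_probs:
  fixes P :: "'x::topological_space \<Rightarrow> 'x measure"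
  assumes mu: "\<mu> \<in> probs" and Pp: "\<And>x. P x \<in> probs"
    and Pm: "P \<in> measurable borel (subprob_algebra borel)"
  shows "measure_of UNIV (sets borel) (\<lambda>B. \<integral>\<^sup>+x. emeasure (P x) B \<partial>\<mu>) \<in> probs"
proof -
  have ms: "sets \<mu> = sets borel" and pm: "prob_space \<mu>" using mu by (auto simp: probs_def)
  have sp: "space \<mu> = UNIV" using sets_eq_imp_space_eq[OF ms] by simp
  have Pm': "P \<in> measurable \<mu> (subprob_algebra borel)"
    unfolding measurable_cong_sets[OF ms refl] by (rule Pm)
  have sb: "sets (\<mu> \<bind> P) = sets borel"
    by (rule sets_bind) (use Pp sp in \<open>auto simp: probs_def\<close>)
  have spb: "space (\<mu> \<bind> P) = UNIV" using sets_eq_imp_space_eq[OF sb] by simp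
  have "measure_of UNIV (sets borel) (\<lambda>B. \<integral>\<^sup>+x. emeasure (P x) B \<partial>\<mu>)
      = measure_of UNIV (sets borel) (emeasure (\<mu> \<bind> P))"
  proof (rule measure_of_eq)
    show "sets borel \<subseteq> Pow UNIV" by simp
    fix a assume "a \<in> sigma_sets UNIV (sets (borel :: 'x measure))"
    then have a: "a \<in> sets borel" using sets.sigma_sets_eq[of "borel :: 'x measure"] by simp
    show "(\<integral>\<^sup>+x. emeasure (P x) a \<partial>\<mu>) = emeasure (\<mu> \<bind> P) a"
      using emeasure_bind[OF _ Pm' a] sp by simp
  qed
  also have "\<dots> = \<mu> \<bind> P" using measure_of_of_measure[of "\<mu> \<bind> P"] spb sb by simp
  finally have eq: "measure_of UNIV (sets borel) (\<lambda>B. \<integral>\<^sup>+x. emeasure (P x) B \<partial>\<mu>) = \<mu> \<bind> P" .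
  have "prob_space (\<mu> \<bind> P)"
    by (rule prob_space.prob_space_bind[OF pm _ Pm']) (use Pp in \<open>auto simp: probs_def\<close>)
  then show ?thesis unfolding eq probs_def using sb by simp
qed



theorem mainTheorem1:
  fixes p :: "'x::polish_space \<Rightarrow> 'a::euclidean_space \<Rightarrow> 'x measure \<Rightarrow> 'x measure"
    and c :: "'x \<Rightarrow> 'a \<Rightarrow> 'x measure \<Rightarrow> real"
    and w :: "'x \<Rightarrow> 'a \<Rightarrow> real"
    and A :: "'a set"
    and DF :: "'x \<Rightarrow> ('x \<Rightarrow> real) \<Rightarrow> 'x measure \<Rightarrow> 'a \<Rightarrow> 'a"
    and \<beta> L1 L2 K1 K2 M \<alpha> \<rho> KF :: real
    and Q :: "'x \<Rightarrow> 'a \<Rightarrow> real"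
    and \<mu> :: "'x measure"
  assumes A_compact: "compact A" and A_nonempty: "A \<noteq> {}"
    and beta: "0 < \<beta>" "\<beta> < 1"
    and consts_nonneg: "0 \<le> L1" "0 \<le> L2" "0 \<le> K1" "0 \<le> K2" "0 \<le> KF"
    (* weight function *)
    and w_cont: "continuous_on (UNIV \<times> A) (\<lambda>z. w (fst z) (snd z))"
    and w_ge1: "\<And>x a. a \<in> A \<Longrightarrow> 1 \<le> w x a"
    (* kernel and cost are well-typed *)
    and p_prob: "\<And>x a \<nu>. a \<in> A \<Longrightarrow> \<nu> \<in> probs \<Longrightarrow> p x a \<nu> \<in> probs"
    and c_nonneg: "\<And>x a \<nu>. a \<in> A \<Longrightarrow> \<nu> \<in> probs \<Longrightarrow> 0 \<le> c x a \<nu>"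
    (* Assumption 1(a) *)
    and c_cont: "\<And>xs x as a ms m. (\<forall>n. as n \<in> A) \<Longrightarrow> a \<in> A \<Longrightarrow> (\<forall>n. ms n \<in> probs) \<Longrightarrow> m \<in> probs \<Longrightarrow>
        xs \<longlonglongrightarrow> x \<Longrightarrow> as \<longlonglongrightarrow> a \<Longrightarrow> weak_conv ms m \<Longrightarrow>
        (\<lambda>n. c (xs n) (as n) (ms n)) \<longlonglongrightarrow> c x a m"
    and c_Lip_mu: "\<And>\<nu> \<nu>' x a. \<nu> \<in> probs \<Longrightarrow> \<nu>' \<in> probs \<Longrightarrow> a \<in> A \<Longrightarrow>
        ennreal (\<bar>c x a \<nu> - c x a \<nu>'\<bar> / w x a) \<le> ennreal L1 * W1 \<nu> \<nu>'"
    and c_Lip_x: "\<And>x x' a \<nu>. a \<in> A \<Longrightarrow> \<nu> \<in> probs \<Longrightarrow>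
        \<bar>c x a \<nu> - c x' a \<nu>\<bar> \<le> L2 * dist x x'"
    (* Assumption 1(b) *)
    and p_cont: "\<And>xs x as a ms m. (\<forall>n. as n \<in> A) \<Longrightarrow> a \<in> A \<Longrightarrow> (\<forall>n. ms n \<in> probs) \<Longrightarrow> m \<in> probs \<Longrightarrow>
        xs \<longlonglongrightarrow> x \<Longrightarrow> as \<longlonglongrightarrow> a \<Longrightarrow> weak_conv ms m \<Longrightarrow>
        weak_conv (\<lambda>n. p (xs n) (as n) (ms n)) (p x a m)"
    and p_Lip_a_mu: "\<And>x a a' \<nu> \<nu>'. a \<in> A \<Longrightarrow> a' \<in> A \<Longrightarrow> \<nu> \<in> probs \<Longrightarrow> \<nu>' \<in> probs \<Longrightarrow>
        W1 (p x a \<nu>) (p x a' \<nu>') \<le> ennreal K1 * (ennreal (norm (a - a')) + W1 \<nu> \<nu>')"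
    and p_Lip_x_a: "\<And>x x' a a' \<nu>. a \<in> A \<Longrightarrow> a' \<in> A \<Longrightarrow> \<nu> \<in> probs \<Longrightarrow>
        W1 (p x a \<nu>) (p x' a' \<nu>) \<le> ennreal K2 * ennreal (dist x x' + norm (a - a'))"
    and betaK2: "\<beta> * K2 < 1"
    (* Assumption 1(c) *)
    and A_convex: "convex A"
    (* Assumption 1(d) *)
    and M_nonneg: "0 \<le> M" and alpha_nonneg: "0 \<le> \<alpha>" and betaalpha: "\<beta> * \<alpha> < 1"
    and c_bound: "\<And>x a \<nu>. a \<in> A \<Longrightarrow> \<nu> \<in> probs \<Longrightarrow> c x a \<nu> \<le> M * w x a"
    and w_drift: "\<And>x a \<nu>. a \<in> A \<Longrightarrow> \<nu> \<in> probs \<Longrightarrow>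
        (\<integral>\<^sup>+ y. ennreal (umax A w y) \<partial>(p x a \<nu>)) \<le> ennreal (\<alpha> * w x a)"
    (* Assumption 1(e), with \<xi> = \<beta>; DF is the gradient in a *)
    and rho_pos: "0 < \<rho>"
    and F_diff: "\<And>x v \<nu> a. v \<in> Fclass A w \<beta> L2 K2 M \<alpha> \<Longrightarrow> \<nu> \<in> probs \<Longrightarrow> a \<in> A \<Longrightarrow>
        (Fop c p \<beta> x v \<nu> has_derivative (\<lambda>h. DF x v \<nu> a \<bullet> h)) (at a within A)"
    and F_strongly_convex: "\<And>x v \<nu> a a'. v \<in> Fclass A w \<beta> L2 K2 M \<alpha> \<Longrightarrow> \<nu> \<in> probs \<Longrightarrow>
        a \<in> A \<Longrightarrow> a' \<in> A \<Longrightarrow>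
        Fop c p \<beta> x v \<nu> a \<ge> Fop c p \<beta> x v \<nu> a' + DF x v \<nu> a' \<bullet> (a - a') + \<rho> / 2 * (norm (a - a'))\<^sup>2"
    and grad_Lip: "\<And>x x' v v' \<nu> \<nu>' a. v \<in> Fclass A w \<beta> L2 K2 M \<alpha> \<Longrightarrow> v' \<in> Fclass A w \<beta> L2 K2 M \<alpha> \<Longrightarrow>
        \<nu> \<in> probs \<Longrightarrow> \<nu>' \<in> probs \<Longrightarrow> a \<in> A \<Longrightarrow>
        ennreal (norm (DF x v \<nu> a - DF x' v' \<nu>' a))
          \<le> ennreal KF * (ennreal (dist x x') + ennreal (wmax_norm A w (\<lambda>y. v y - v' y)) + W1 \<nu> \<nu>')"
    (* the pair (Q, \<mu>) *)
    and Q_in: "Q \<in> Cclass A w \<beta> L2 K2 M \<alpha>"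
    and mu_in: "\<mu> \<in> probs"
  shows "(\<forall>x. \<exists>!a. is_minimizer A (Fop c p \<beta> x (umin A Q) \<mu>) a)
         \<and> H1 c p \<beta> A Q \<mu> \<in> Cclass A w \<beta> L2 K2 M \<alpha>
         \<and> H2 c p \<beta> A Q \<mu> \<in> probs
         \<and> wnorm_le A w (H1 c p \<beta> A Q \<mu>) (M / (1 - \<beta> * \<alpha>))
         \<and> (\<forall>x y. \<bar>umin A (H1 c p \<beta> A Q \<mu>) x - umin A (H1 c p \<beta> A Q \<mu>) y\<bar>
                   \<le> (L2 / (1 - \<beta> * K2)) * dist x y)"
proof -
  define K where "K = L2 / (1 - \<beta> * K2)"
  define B where "B = M / (1 - \<beta> * \<alpha>)"
  define g where "g = umin A Q"
  have K0: "0 \<le> K" using betaK2 consts_nonneg(2) by (simp add: K_def)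
  have K1: "K * (1 - \<beta> * K2) = L2" using betaK2 by (simp add: K_def)
  have B0: "0 \<le> B" using betaalpha M_nonneg by (simp add: B_def)
  have B1: "B * (1 - \<beta> * \<alpha>) = M" using betaalpha by (simp add: B_def)
  have Qnn: "\<And>x a. a \<in> A \<Longrightarrow> 0 \<le> Q x a" and Qw: "\<And>x a. a \<in> A \<Longrightarrow> \<bar>Q x a\<bar> \<le> B * w x a"
    and glip: "\<And>x y. \<bar>g x - g y\<bar> \<le> K * dist x y"
    using Q_in by (auto simp: Cclass_def wnorm_le_def B_def K_def g_def)
  have g_nn: "0 \<le> g x" for x
    unfolding g_def umin_def by (rule cINF_greatest[OF A_nonempty]) (rule Qnn)
  have g_cont: "continuous_on UNIV g"
    by (rule lipschitz_on_continuous_on[of K], rule lipschitz_onI) (use glip K0 in \<open>auto simp: dist_real_def\<close>)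
  have g_meas: "g \<in> borel_measurable borel" using g_cont by (rule borel_measurable_continuous_onI)
  have wbdd: "bdd_above (w x ` A)" for x
  proof -
    have "continuous_on A (\<lambda>a. (\<lambda>z. w (fst z) (snd z)) (x, a))"
      by (rule continuous_on_compose2[OF w_cont]) (auto intro!: continuous_intros)
    then have "compact (w x ` A)" using compact_continuous_image[OF _ A_compact] by simp
    then show ?thesis by (intro bounded_imp_bdd_above compact_imp_bounded)
  qed
  have w_le: "\<And>x a. a \<in> A \<Longrightarrow> w x a \<le> umax A w x"
    unfolding umax_def using wbdd by (intro cSUP_upper) auto
  obtain a0 where a0: "a0 \<in> A" using A_nonempty by blast
  have umax1: "1 \<le> umax A w x" for x using w_le[OF a0, of x] w_ge1[OF a0, of x] by simp
  have g_le: "g x \<le> B * umax A w x" for x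
  proof -
    have "g x \<le> Q x a0" unfolding g_def umin_def
      by (rule cINF_lower[OF _ a0]) (use Qnn in \<open>auto intro!: bdd_belowI2\<close>)
    also have "\<dots> \<le> B * w x a0" using Qw[OF a0, of x] by simp
    also have "\<dots> \<le> B * umax A w x" using w_le[OF a0] B0 by (simp add: mult_left_mono)
    finally show ?thesis .
  qed
  have g_F: "g \<in> Fclass A w \<beta> L2 K2 M \<alpha>"
    unfolding Fclass_def LipSet_def Bset_def
    using g_nn g_cont g_meas glip g_le by (auto simp: K_def B_def)
  have PP: "\<And>x a. a \<in> A \<Longrightarrow> p x a \<mu> \<in> probs" using p_prob mu_in by blast
  have gint: "integrable (p x a \<mu>) g \<and> integral\<^sup>L (p x a \<mu>) g \<le> B * (\<alpha> * w x a)" if a: "a \<in> A" for x a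
  proof -
    have gm: "g \<in> borel_measurable (p x a \<mu>)" by (rule meas_probs[OF PP[OF a] g_meas])
    have "(\<integral>\<^sup>+y. ennreal (g y) \<partial>p x a \<mu>) = (\<integral>\<^sup>+y. ennreal B * ennreal (g y / B) \<partial>p x a \<mu>)"
    proof (rule nn_integral_cong)
      fix y
      show "ennreal (g y) = ennreal B * ennreal (g y / B)"
      proof (cases "B = 0")
        case True then have "g y = 0" using g_le[of y] g_nn[of y] by simp
        then show ?thesis using True by simp
      next
        case False then show ?thesis using B0 g_nn[of y] by (simp add: ennreal_mult[symmetric])
      qed
    qed
    also have "\<dots> = ennreal B * (\<integral>\<^sup>+y. ennreal (g y / B) \<partial>p x a \<mu>)"
      by (rule nn_integral_cmult) (use gm in simp)
    also have "\<dots> \<le> ennreal B * (\<integral>\<^sup>+y. ennreal (umax A w y) \<partial>p x a \<mu>)"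
    proof (intro mult_left_mono nn_integral_mono ennreal_leI)
      fix y show "g y / B \<le> umax A w y"
      proof (cases "B = 0")
        case True then show ?thesis using umax1[of y] by simp
      next
        case False then show ?thesis using B0 g_le[of y] by (simp add: divide_le_eq mult.commute)
      qed
    qed simp
    also have "\<dots> \<le> ennreal B * ennreal (\<alpha> * w x a)"
      by (intro mult_left_mono w_drift[OF a mu_in]) simp
    also have "\<dots> = ennreal (B * (\<alpha> * w x a))"
      using B0 alpha_nonneg w_ge1[OF a, of x] by (simp add: ennreal_mult)
    finally have nn: "(\<integral>\<^sup>+y. ennreal (g y) \<partial>p x a \<mu>) \<le> ennreal (B * (\<alpha> * w x a))" .
    have "integrable (p x a \<mu>) g"
      by (rule integrableI_bounded[OF gm]) (use nn g_nn in \<open>auto simp: top.not_eq_extremum intro: le_less_trans\<close>)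
    moreover have "integral\<^sup>L (p x a \<mu>) g \<le> B * (\<alpha> * w x a)"
      using integral_eq_nn_integral[OF gm] g_nn nn enn2real_leI[OF _ nn] B0 alpha_nonneg w_ge1[OF a, of x] by simp
    ultimately show ?thesis by simp
  qed
  have H1eq: "H1 c p \<beta> A Q \<mu> x a = c x a \<mu> + \<beta> * integral\<^sup>L (p x a \<mu>) g" for x a
    by (simp add: H1_def g_def)
  have Fop_eq: "Fop c p \<beta> x (umin A Q) \<mu> = H1 c p \<beta> A Q \<mu> x" for x
    by (simp add: H1_def Fop_def fun_eq_iff)
  have H1_nn: "0 \<le> H1 c p \<beta> A Q \<mu> x a" if a: "a \<in> A" for x a
    unfolding H1eq using c_nonneg[OF a mu_in] beta g_nn by (simp add: integral_nonneg)
  have H1_le: "H1 c p \<beta> A Q \<mu> x a \<le> B * w x a" if a: "a \<in> A" for x a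
  proof -
    have "H1 c p \<beta> A Q \<mu> x a \<le> M * w x a + \<beta> * (B * (\<alpha> * w x a))"
      unfolding H1eq using c_bound[OF a mu_in, of x] gint[OF a, of x] beta
      by (intro add_mono mult_left_mono) auto
    also have "\<dots> = B * w x a" unfolding B1[symmetric] by (simp add: algebra_simps)
    finally show ?thesis .
  qed
  have H1_lip: "\<bar>H1 c p \<beta> A Q \<mu> x a - H1 c p \<beta> A Q \<mu> y a\<bar> \<le> K * dist x y" if a: "a \<in> A" for x y a
  proof -
    have cl: "\<bar>c x a \<mu> - c y a \<mu>\<bar> \<le> L2 * dist x y" by (rule c_Lip_x[OF a mu_in])
    have W: "W1 (p x a \<mu>) (p y a \<mu>) \<le> ennreal (K2 * dist x y)"
      using p_Lip_x_a[OF a a mu_in, of x y] consts_nonneg(4) by (simp add: ennreal_mult)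
    then have Wf: "W1 (p x a \<mu>) (p y a \<mu>) < \<top>" using le_less_trans by fastforce
    have We: "enn2real (W1 (p x a \<mu>) (p y a \<mu>)) \<le> K2 * dist x y"
      by (rule enn2real_leI[OF _ W]) (use consts_nonneg(4) in simp)
    have il: "\<bar>integral\<^sup>L (p x a \<mu>) g - integral\<^sup>L (p y a \<mu>) g\<bar> \<le> K * (K2 * dist x y)"
    proof (cases "K = 0")
      case True
      then have gc: "g = (\<lambda>_. g x)" using glip[of _ x] by (auto simp: fun_eq_iff)
      have "prob_space (p x a \<mu>)" "prob_space (p y a \<mu>)" using PP[OF a] by (auto simp: probs_def)
      then have "integral\<^sup>L (p x a \<mu>) g = g x" "integral\<^sup>L (p y a \<mu>) g = g x"
        by (subst gc, simp add: prob_space.prob_space)+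
      then show ?thesis using True by simp
    next
      case False
      then have Kp: "0 < K" using K0 by simp
      have "\<bar>integral\<^sup>L (p x a \<mu>) g - integral\<^sup>L (p y a \<mu>) g\<bar> \<le> K * enn2real (W1 (p x a \<mu>) (p y a \<mu>))"
        by (rule KR_bound[OF PP[OF a] PP[OF a] g_meas _ _ glip Kp Wf]) (use gint[OF a] in auto)
      also have "\<dots> \<le> K * (K2 * dist x y)" using We K0 by (simp add: mult_left_mono)
      finally show ?thesis .
    qed
    have "\<bar>H1 c p \<beta> A Q \<mu> x a - H1 c p \<beta> A Q \<mu> y a\<bar>
        = \<bar>(c x a \<mu> - c y a \<mu>) + \<beta> * (integral\<^sup>L (p x a \<mu>) g - integral\<^sup>L (p y a \<mu>) g)\<bar>"
      unfolding H1eq by (simp add: algebra_simps)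
    also have "\<dots> \<le> \<bar>c x a \<mu> - c y a \<mu>\<bar> + \<beta> * \<bar>integral\<^sup>L (p x a \<mu>) g - integral\<^sup>L (p y a \<mu>) g\<bar>"
      using beta by (simp add: abs_mult abs_triangle_ineq[THEN order_trans])
    also have "\<dots> \<le> L2 * dist x y + \<beta> * (K * (K2 * dist x y))"
      using cl il beta by (intro add_mono mult_left_mono) auto
    also have "\<dots> = K * dist x y" unfolding K1[symmetric] by (simp add: algebra_simps)
    finally show ?thesis .
  qed
  have umin_lip: "\<bar>umin A (H1 c p \<beta> A Q \<mu>) x - umin A (H1 c p \<beta> A Q \<mu>) y\<bar> \<le> K * dist x y" for x y
    by (rule umin_diff_le[where u="H1 c p \<beta> A Q \<mu>", OF A_nonempty H1_nn H1_nn H1_lip])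
  have wc: "weak_conv (\<lambda>n. \<mu>) \<mu>" by (simp add: weak_conv_def)
  have H1_meas: "(\<lambda>z. H1 c p \<beta> A Q \<mu> (fst z) (snd z)) \<in> borel_measurable (restrict_space borel (UNIV \<times> A))"
  proof -
    have cc: "continuous_on (UNIV \<times> A) (\<lambda>z. c (fst z) (snd z) \<mu>)"
    proof (rule continuous_on_sequentiallyI)
      fix u :: "nat \<Rightarrow> 'x \<times> 'a" and z assume u: "\<forall>n. u n \<in> UNIV \<times> A" "z \<in> UNIV \<times> A" "u \<longlonglongrightarrow> z"
      show "(\<lambda>n. c (fst (u n)) (snd (u n)) \<mu>) \<longlonglongrightarrow> c (fst z) (snd z) \<mu>"
        by (rule c_cont) (use u mu_in wc in \<open>auto simp: mem_Times_iff intro: tendsto_fst tendsto_snd\<close>)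
    qed
    define gn where "gn n y = min (g y) (real n)" for n y
    have gnc: "continuous_on UNIV (gn n)" for n unfolding gn_def by (intro continuous_intros g_cont)
    have gnb: "bounded (range (gn n))" for n
    proof -
      have "\<forall>y. norm (gn n y) \<le> real n" unfolding gn_def using g_nn by auto
      then show ?thesis by (auto simp: bounded_iff)
    qed
    have Jc: "continuous_on (UNIV \<times> A) (\<lambda>z. integral\<^sup>L (p (fst z) (snd z) \<mu>) (gn n))" for n
    proof (rule continuous_on_sequentiallyI)
      fix u :: "nat \<Rightarrow> 'x \<times> 'a" and z assume u: "\<forall>n. u n \<in> UNIV \<times> A" "z \<in> UNIV \<times> A" "u \<longlonglongrightarrow> z"
      have "weak_conv (\<lambda>n. p (fst (u n)) (snd (u n)) \<mu>) (p (fst z) (snd z) \<mu>)"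
        by (rule p_cont) (use u mu_in wc in \<open>auto simp: mem_Times_iff intro: tendsto_fst tendsto_snd\<close>)
      then show "(\<lambda>m. integral\<^sup>L (p (fst (u m)) (snd (u m)) \<mu>) (gn n)) \<longlonglongrightarrow> integral\<^sup>L (p (fst z) (snd z) \<mu>) (gn n)"
        unfolding weak_conv_def using gnc gnb by blast
    qed
    have Jlim: "(\<lambda>n. integral\<^sup>L (p (fst z) (snd z) \<mu>) (gn n)) \<longlonglongrightarrow> integral\<^sup>L (p (fst z) (snd z) \<mu>) g"
      if z: "z \<in> space (restrict_space borel (UNIV \<times> A))" for z
    proof -
      have a: "snd z \<in> A" using z by (auto simp: space_restrict_space mem_Times_iff)
      note Pz = PP[OF a, of "fst z"]
      show ?thesis
      proof (rule integral_dominated_convergence[where w=g])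
        show "g \<in> borel_measurable (p (fst z) (snd z) \<mu>)" by (rule meas_probs[OF Pz g_meas])
        show "gn n \<in> borel_measurable (p (fst z) (snd z) \<mu>)" for n
          by (rule meas_probs[OF Pz borel_measurable_continuous_onI[OF gnc]])
        show "integrable (p (fst z) (snd z) \<mu>) g" using gint[OF a] by simp
        show "AE y in p (fst z) (snd z) \<mu>. (\<lambda>n. gn n y) \<longlonglongrightarrow> g y"
        proof (rule AE_I2)
          fix y
          obtain N where N: "g y \<le> real N" using real_arch_simple by blast
          have "eventually (\<lambda>n. gn n y = g y) sequentially"
            by (rule eventually_sequentiallyI[of N]) (use N in \<open>auto simp: gn_def\<close>)
          then show "(\<lambda>n. gn n y) \<longlonglongrightarrow> g y" by (rule tendsto_eventually)
        qed
        show "AE y in p (fst z) (snd z) \<mu>. norm (gn n y) \<le> g y" for n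
          using g_nn by (auto simp: gn_def)
      qed
    qed
    have Jm: "(\<lambda>z. integral\<^sup>L (p (fst z) (snd z) \<mu>) g) \<in> borel_measurable (restrict_space borel (UNIV \<times> A))"
      by (rule borel_measurable_LIMSEQ_real[where u="\<lambda>n z. integral\<^sup>L (p (fst z) (snd z) \<mu>) (gn n)", OF Jlim])
        (assumption, rule borel_measurable_continuous_on_restrict[OF Jc])
    have "(\<lambda>z. c (fst z) (snd z) \<mu> + \<beta> * integral\<^sup>L (p (fst z) (snd z) \<mu>) g) \<in> borel_measurable (restrict_space borel (UNIV \<times> A))"
      using borel_measurable_continuous_on_restrict[OF cc] Jm by measurable
    then show ?thesis by (simp add: H1eq)
  qed
  have sc: "\<And>x u v. u \<in> A \<Longrightarrow> v \<in> A \<Longrightarrow> H1 c p \<beta> A Q \<mu> x u \<ge> H1 c p \<beta> A Q \<mu> x v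
      + DF x g \<mu> v \<bullet> (u - v) + \<rho> / 2 * (norm (u - v))\<^sup>2"
    using F_strongly_convex[OF g_F mu_in] unfolding g_def Fop_eq by blast
  have ex1: "\<exists>!a. is_minimizer A (Fop c p \<beta> x (umin A Q) \<mu>) a" for x
  proof -
    have "continuous_on A (Fop c p \<beta> x g \<mu>)"
      unfolding continuous_on_eq_continuous_within
      using F_diff[OF g_F mu_in] has_derivative_continuous by blast
    then have "continuous_on A (H1 c p \<beta> A Q \<mu> x)" unfolding g_def Fop_eq .
    then obtain a where a: "a \<in> A" "\<forall>b\<in>A. H1 c p \<beta> A Q \<mu> x a \<le> H1 c p \<beta> A Q \<mu> x b"
      using continuous_attains_inf[OF A_compact A_nonempty] by blast
    show ?thesis
    proof (rule ex1I[of _ a])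
      show "is_minimizer A (Fop c p \<beta> x (umin A Q) \<mu>) a" using a by (simp add: is_minimizer_def Fop_eq)
      fix b assume "is_minimizer A (Fop c p \<beta> x (umin A Q) \<mu>) b"
      then have b: "b \<in> A" "H1 c p \<beta> A Q \<mu> x b \<le> H1 c p \<beta> A Q \<mu> x a"
        using a by (auto simp: is_minimizer_def Fop_eq)
      have "H1 c p \<beta> A Q \<mu> x b \<ge> H1 c p \<beta> A Q \<mu> x a + \<rho> / 4 * (norm (a - b))\<^sup>2"
        by (rule quad_growth[OF A_convex a(1) b(1) a(2) sc])
      then have "\<rho> / 4 * (norm (a - b))\<^sup>2 \<le> 0" using b by simp
      then have "(norm (a - b))\<^sup>2 \<le> 0" using rho_pos by (simp add: mult_le_0_iff)
      then show "b = a" by simp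
    qed
  qed
  define f where "f x = fpol c p \<beta> A x Q \<mu>" for x
  have fmin: "f x \<in> A" "\<forall>b\<in>A. H1 c p \<beta> A Q \<mu> x (f x) \<le> H1 c p \<beta> A Q \<mu> x b" for x
    using theI'[OF ex1[of x]] unfolding f_def fpol_def is_minimizer_def Fop_eq by auto
  have fbound: "(norm (f x - f y))\<^sup>2 \<le> 4 * K / \<rho> * dist x y" for x y
  proof -
    have q1: "H1 c p \<beta> A Q \<mu> x (f y) \<ge> H1 c p \<beta> A Q \<mu> x (f x) + \<rho> / 4 * (norm (f x - f y))\<^sup>2"
      by (rule quad_growth[OF A_convex fmin(1) fmin(1) fmin(2) sc])
    have q2: "H1 c p \<beta> A Q \<mu> y (f x) \<ge> H1 c p \<beta> A Q \<mu> y (f y) + \<rho> / 4 * (norm (f y - f x))\<^sup>2"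
      by (rule quad_growth[OF A_convex fmin(1) fmin(1) fmin(2) sc])
    have l1: "\<bar>H1 c p \<beta> A Q \<mu> x (f y) - H1 c p \<beta> A Q \<mu> y (f y)\<bar> \<le> K * dist x y" by (rule H1_lip[OF fmin(1)])
    have l2: "\<bar>H1 c p \<beta> A Q \<mu> x (f x) - H1 c p \<beta> A Q \<mu> y (f x)\<bar> \<le> K * dist x y" by (rule H1_lip[OF fmin(1)])
    have "norm (f y - f x) = norm (f x - f y)" by (rule norm_minus_commute)
    then have q2': "H1 c p \<beta> A Q \<mu> y (f x) \<ge> H1 c p \<beta> A Q \<mu> y (f y) + \<rho> / 4 * (norm (f x - f y))\<^sup>2"
      using q2 by simp
    have "\<rho> / 4 * (norm (f x - f y))\<^sup>2 + \<rho> / 4 * (norm (f x - f y))\<^sup>2 = \<rho> / 2 * (norm (f x - f y))\<^sup>2"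
      by simp
    then have "\<rho> / 2 * (norm (f x - f y))\<^sup>2 \<le> 2 * (K * dist x y)" using q1 q2' l1 l2 unfolding abs_le_iff by linarith
    then show ?thesis using rho_pos by (simp add: field_simps)
  qed
  have fcont: "(\<lambda>n. f (xs n)) \<longlonglongrightarrow> f x" if xs: "xs \<longlonglongrightarrow> x" for xs x
  proof -
    have d: "(\<lambda>n. dist (xs n) x) \<longlonglongrightarrow> 0" using tendsto_dist[OF xs tendsto_const, of x] by simp
    have "(\<lambda>n. 4 * K / \<rho> * dist (xs n) x) \<longlonglongrightarrow> 4 * K / \<rho> * 0" by (intro tendsto_intros d)
    have "(\<lambda>n. (norm (f (xs n) - f x))\<^sup>2) \<longlonglongrightarrow> 0"
    proof (rule tendsto_sandwich[of "\<lambda>_. 0" _ _ "\<lambda>n. 4 * K / \<rho> * dist (xs n) x"])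
      show "\<forall>\<^sub>F n in sequentially. 0 \<le> (norm (f (xs n) - f x))\<^sup>2" by simp
      show "\<forall>\<^sub>F n in sequentially. (norm (f (xs n) - f x))\<^sup>2 \<le> 4 * K / \<rho> * dist (xs n) x"
        using fbound by simp
      show "(\<lambda>n. 0::real) \<longlonglongrightarrow> 0" by simp
    qed (use \<open>(\<lambda>n. 4 * K / \<rho> * dist (xs n) x) \<longlonglongrightarrow> 4 * K / \<rho> * 0\<close> in simp)
    then have "(\<lambda>n. sqrt ((norm (f (xs n) - f x))\<^sup>2)) \<longlonglongrightarrow> sqrt 0" by (rule tendsto_real_sqrt)
    then have "(\<lambda>n. norm (f (xs n) - f x)) \<longlonglongrightarrow> 0" by simp
    then show ?thesis by (simp add: tendsto_norm_zero_iff LIM_zero_iff)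
  qed
  define P where "P x = p x (f x) \<mu>" for x
  have Pp: "P x \<in> probs" for x unfolding P_def by (rule PP[OF fmin(1)])
  have Pcont: "(\<lambda>x. integral\<^sup>L (P x) h) \<in> borel_measurable borel"
    if h: "continuous_on UNIV h" "bounded (range h)" for h :: "'x \<Rightarrow> real"
  proof (rule borel_measurable_continuous_onI, rule continuous_on_sequentiallyI)
    fix xs x assume xs: "\<forall>n. xs n \<in> (UNIV :: 'x set)" "x \<in> (UNIV :: 'x set)" "xs \<longlonglongrightarrow> x"
    have "weak_conv (\<lambda>n. p (xs n) (f (xs n)) \<mu>) (p x (f x) \<mu>)"
      by (rule p_cont) (use xs mu_in wc fmin(1) fcont in auto)
    then show "(\<lambda>n. integral\<^sup>L (P (xs n)) h) \<longlonglongrightarrow> integral\<^sup>L (P x) h"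
      unfolding weak_conv_def P_def using h by blast
  qed
  have H2p: "H2 c p \<beta> A Q \<mu> \<in> probs"
    using bind_probs[OF mu_in Pp kernel_measurable[OF Pp Pcont]]
    unfolding H2_def P_def f_def .
  have wn: "wnorm_le A w (H1 c p \<beta> A Q \<mu>) (M / (1 - \<beta> * \<alpha>))"
    unfolding wnorm_le_def B_def[symmetric] using H1_nn H1_le by simp
  have ul: "\<forall>x y. \<bar>umin A (H1 c p \<beta> A Q \<mu>) x - umin A (H1 c p \<beta> A Q \<mu>) y\<bar>
                   \<le> (L2 / (1 - \<beta> * K2)) * dist x y"
    unfolding K_def[symmetric] using umin_lip by blast
  have HC: "H1 c p \<beta> A Q \<mu> \<in> Cclass A w \<beta> L2 K2 M \<alpha>"
    unfolding Cclass_def using H1_meas H1_nn wn ul by blast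
  show ?thesis using ex1 HC H2p wn ul by blast
qed

end
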